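(* Let $\Sigma$ be a non-empty finite or countably infinite alphabet, $p$ a positive Bernoulli distribution on $\Sigma$, $A=(Q,\Sigma,\delta,q_s,F)$ a strongly connected DFA, and $b,\epsilon$ real numbers with $0<b\le1$, $\epsilon>0$. Then $\lim_{n\to\infty}\mu_p(G_n(b,\epsilon))=0$.
   Context: $p:\Sigma\to(0,1]$ with $\sum_ap(a)=1$; $\mu_p(a_1\cdots a_n)=\prod_ip(a_i)$, $\mu_p(W)=\sum_{w\in W}\mu_p(w)$. $A_q$ is $A$ with start state $q$; for $w=w_1\cdots w_n$, $A_q[w]$ is the subsequence of those $w_i$ with $\delta^*(q,w_1\cdots w_{i-1})\in F$; $\#_a(v)$ counts occurrences of $a$ in $v$. Define $G_n(b,\epsilon,q)=\{w\in\Sigma^n: |A_q[w]|>bn\ \text{and}\ \sup_{a\in\Sigma}|\#_a(A_q[w])/|A_q[w]|-p(a)|\ge\epsilon\}$ and $G_n(b,\epsilon)=\bigcup_{q\in Q}G_n(b,\epsilon,q)$. *)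

theory Defs
  imports "HOL-Analysis.Analysis"
begin

definition delta_star :: "('s \<Rightarrow> 'a \<Rightarrow> 's) \<Rightarrow> 's \<Rightarrow> 'a list \<Rightarrow> 's" where
  "delta_star \<delta> q w = foldl \<delta> q w"

definition is_dfa :: "'s set \<Rightarrow> 'a set \<Rightarrow> ('s \<Rightarrow> 'a \<Rightarrow> 's) \<Rightarrow> 's \<Rightarrow> 's set \<Rightarrow> bool" where
  "is_dfa Q Sig \<delta> qs F \<longleftrightarrow> finite Q \<and> Q \<noteq> {} \<and> qs \<in> Q \<and> F \<subseteq> Q \<and>
     (\<forall>q\<in>Q. \<forall>a\<in>Sig. \<delta> q a \<in> Q)"

definition strongly_connected :: "'s set \<Rightarrow> 'a set \<Rightarrow> ('s \<Rightarrow> 'a \<Rightarrow> 's) \<Rightarrow> bool" where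
  "strongly_connected Q Sig \<delta> \<longleftrightarrow>
     (\<forall>q\<in>Q. \<forall>q'\<in>Q. \<exists>w\<in>lists Sig. delta_star \<delta> q w = q')"

text \<open>A_q[w]: the subsequence of letters read while the automaton (started in q) is in F.\<close>
fun selected :: "('s \<Rightarrow> 'a \<Rightarrow> 's) \<Rightarrow> 's set \<Rightarrow> 's \<Rightarrow> 'a list \<Rightarrow> 'a list" where
  "selected \<delta> F q [] = []"
| "selected \<delta> F q (a # w) =
     (if q \<in> F then a # selected \<delta> F (\<delta> q a) w else selected \<delta> F (\<delta> q a) w)"

definition mu :: "('a \<Rightarrow> real) \<Rightarrow> 'a list set \<Rightarrow> real" where
  "mu p W = (\<Sum>\<^sub>\<infinity>w\<in>W. (\<Prod>i<length w. p (w ! i)))"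

definition words :: "'a set \<Rightarrow> nat \<Rightarrow> 'a list set" where
  "words Sig n = {w. length w = n \<and> set w \<subseteq> Sig}"

definition G_q :: "'s set \<Rightarrow> 'a set \<Rightarrow> ('s \<Rightarrow> 'a \<Rightarrow> 's) \<Rightarrow> 's set \<Rightarrow> ('a \<Rightarrow> real)
    \<Rightarrow> nat \<Rightarrow> real \<Rightarrow> real \<Rightarrow> 's \<Rightarrow> 'a list set" where
  "G_q Q Sig \<delta> F p n b \<epsilon> q = {w \<in> words Sig n.
     real (length (selected \<delta> F q w)) > b * real n \<and>
     (SUP a\<in>Sig. \<bar>real (count_list (selected \<delta> F q w) a) / real (length (selected \<delta> F q w)) - p a\<bar>) \<ge> \<epsilon>}"

definition G :: "'s set \<Rightarrow> 'a set \<Rightarrow> ('s \<Rightarrow> 'a \<Rightarrow> 's) \<Rightarrow> 's set \<Rightarrow> ('a \<Rightarrow> real)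
    \<Rightarrow> nat \<Rightarrow> real \<Rightarrow> real \<Rightarrow> 'a list set" where
  "G Q Sig \<delta> F p n b \<epsilon> = (\<Union>q\<in>Q. G_q Q Sig \<delta> F p n b \<epsilon> q)"

end

theory Submission
  imports Defs "HOL-Probability.Probability"
begin


lemma integral_bind_pmf_bdd:
  fixes f :: "_ \<Rightarrow> real"
  assumes "\<And>x. \<bar>f x\<bar> \<le> B"
  shows "measure_pmf.expectation (bind_pmf M N) f = measure_pmf.expectation M (\<lambda>x. measure_pmf.expectation (N x) f)"
  unfolding measure_pmf_bind
  apply (rule integral_bind[where K="count_space UNIV" and B=B and B'=1])
  using assms apply (auto simp: measure_subprob)
  done

lemma integral_bind_pmf_bdd_on:
  fixes f :: "_ \<Rightarrow> real"
  assumes "\<And>x. x \<in> set_pmf (bind_pmf M N) \<Longrightarrow> \<bar>f x\<bar> \<le> B"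
  shows "measure_pmf.expectation (bind_pmf M N) f = measure_pmf.expectation M (\<lambda>x. measure_pmf.expectation (N x) f)"
proof -
  define g where "g x = (if x \<in> set_pmf (bind_pmf M N) then f x else 0)" for x
  obtain x0 where "x0 \<in> set_pmf (bind_pmf M N)" using set_pmf_not_empty by fastforce
  then have "0 \<le> B" using assms[of x0] by linarith
  then have gb: "\<bar>g x\<bar> \<le> B" for x using assms[of x] by (auto simp: g_def)
  have "measure_pmf.expectation (bind_pmf M N) f = measure_pmf.expectation (bind_pmf M N) g"
    by (intro integral_cong_AE) (auto simp: g_def AE_measure_pmf_iff)
  also have "\<dots> = measure_pmf.expectation M (\<lambda>x. measure_pmf.expectation (N x) g)"
    using gb by (rule integral_bind_pmf_bdd)
  also have "\<dots> = measure_pmf.expectation M (\<lambda>x. measure_pmf.expectation (N x) f)"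
    by (intro integral_cong_AE) (auto simp: g_def AE_measure_pmf_iff intro!: integral_cong_AE)
  finally show ?thesis .
qed

lemma int_bdd_on:
  fixes f :: "_ \<Rightarrow> real"
  assumes "\<And>x. x \<in> set_pmf M \<Longrightarrow> \<bar>f x\<bar> \<le> B"
  shows "integrable (measure_pmf M) f"
  by (rule measure_pmf.integrable_const_bound[where B=B]) (auto simp: AE_measure_pmf_iff assms)

primrec wordsp :: "'a pmf \<Rightarrow> nat \<Rightarrow> 'a list pmf" where
  "wordsp D 0 = return_pmf []"
| "wordsp D (Suc n) = bind_pmf D (\<lambda>a. map_pmf (Cons a) (wordsp D n))"

lemma set_wordsp: "w \<in> set_pmf (wordsp D n) \<Longrightarrow> length w = n"
  by (induction n arbitrary: w) auto

lemma pmf_wordsp: "pmf (wordsp D n) w = (if length w = n then (\<Prod>i<n. pmf D (w ! i)) else 0)"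
proof (induction n arbitrary: w)
  case 0
  then show ?case by (cases w) auto
next
  case (Suc n)
  show ?case
  proof (cases w)
    case Nil
    then show ?thesis by (auto simp: pmf_eq_0_set_pmf)
  next
    case (Cons a w')
    have e: "pmf (map_pmf (Cons x) (wordsp D n)) (a # w') = pmf (wordsp D n) w' * indicator {a} x" for x
    proof (cases "x = a")
      case True
      then show ?thesis by (simp add: pmf_map_inj')
    next
      case False
      then show ?thesis by (subst pmf_map_outside) auto
    qed
    have "pmf (wordsp D (Suc n)) w = pmf (wordsp D n) w' * pmf D a"
      by (simp add: Cons pmf_bind e measure_pmf_single)
    then show ?thesis using Suc.IH[of w'] by (simp add: Cons prod.lessThan_Suc_shift mult.commute del: prod.lessThan_Suc)
  qed
qed

fun Tf :: "('s \<Rightarrow> 'a \<Rightarrow> 's) \<Rightarrow> 's set \<Rightarrow> ('a \<Rightarrow> real) \<Rightarrow> 's \<Rightarrow> 'a list \<Rightarrow> real" where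
  "Tf \<delta> F f q [] = 0"
| "Tf \<delta> F f q (a # w) = (if q \<in> F then f a else 0) + Tf \<delta> F f (\<delta> q a) w"

lemma Tf_bound: "(\<And>a. \<bar>f a\<bar> \<le> 1) \<Longrightarrow> \<bar>Tf \<delta> F f q w\<bar> \<le> length w"
proof (induction w arbitrary: q)
  case Nil then show ?case by simp
next
  case (Cons a w)
  have "\<bar>(if q \<in> F then f a else 0)\<bar> \<le> 1" using Cons.prems by auto
  moreover have "\<bar>Tf \<delta> F f (\<delta> q a) w\<bar> \<le> length w" using Cons by blast
  ultimately show ?case by simp
qed

lemma Tf_bound':
  assumes "\<And>a. \<bar>f a\<bar> \<le> 1" and "length w = m"
  shows "\<bar>Tf \<delta> F f q w\<bar> \<le> real m"
proof -
  have "\<bar>Tf \<delta> F f q w\<bar> \<le> real (length w)" by (rule Tf_bound) (rule assms(1))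
  then show ?thesis using assms(2) by simp
qed

lemma sq_bound: fixes x y :: real shows "\<bar>x\<bar> \<le> y \<Longrightarrow> \<bar>x^2\<bar> \<le> y^2"
  by (metis abs_ge_zero abs_power2 power2_abs power_mono)

lemma Tf_int:
  assumes fb: "\<And>a. \<bar>f a\<bar> \<le> 1"
  shows "integrable (measure_pmf (wordsp D n)) (Tf \<delta> F f q)"
    and "integrable (measure_pmf (wordsp D n)) (\<lambda>w. (Tf \<delta> F f q w)^2)"
proof -
  show "integrable (measure_pmf (wordsp D n)) (Tf \<delta> F f q)"
    by (rule int_bdd_on[where B="real n"]) (rule Tf_bound'[OF fb set_wordsp])
  show "integrable (measure_pmf (wordsp D n)) (\<lambda>w. (Tf \<delta> F f q w)^2)"
  proof (rule int_bdd_on[where B="real n ^ 2"])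
    fix w assume "w \<in> set_pmf (wordsp D n)"
    then have "\<bar>Tf \<delta> F f q w\<bar> \<le> real n" by (rule Tf_bound'[OF fb set_wordsp])
    then show "\<bar>(Tf \<delta> F f q w)^2\<bar> \<le> real n ^ 2"
      by (rule sq_bound)
  qed
qed

lemma Tf_bind:
  fixes g :: "'a list \<Rightarrow> real"
  assumes "\<And>w. length w = Suc n \<Longrightarrow> \<bar>g w\<bar> \<le> B"
  shows "measure_pmf.expectation (wordsp D (Suc n)) g =
    measure_pmf.expectation D (\<lambda>a. measure_pmf.expectation (wordsp D n) (\<lambda>w. g (a # w)))"
proof -
  have "measure_pmf.expectation (wordsp D (Suc n)) g =
    measure_pmf.expectation D (\<lambda>a. measure_pmf.expectation (map_pmf (Cons a) (wordsp D n)) g)"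
    unfolding wordsp.simps
    by (rule integral_bind_pmf_bdd_on[where B=B]) (rule assms, rule set_wordsp[of _ D "Suc n"], simp)
  then show ?thesis by simp
qed

lemma Tf_mean:
  assumes fb: "\<And>a. \<bar>f a\<bar> \<le> 1" and f0: "measure_pmf.expectation D f = 0"
  shows "measure_pmf.expectation (wordsp D n) (Tf \<delta> F f q) = 0"
proof (induction n arbitrary: q)
  case 0
  then show ?case by simp
next
  case (Suc n)
  define c where "c a = (if q \<in> F then f a else 0)" for a
  have "measure_pmf.expectation (wordsp D (Suc n)) (Tf \<delta> F f q) =
    measure_pmf.expectation D (\<lambda>a. measure_pmf.expectation (wordsp D n) (\<lambda>w. Tf \<delta> F f q (a # w)))"
    by (rule Tf_bind[where B="real (Suc n)"]) (rule Tf_bound'[OF fb])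
  also have "\<dots> = measure_pmf.expectation D (\<lambda>a. c a + measure_pmf.expectation (wordsp D n) (Tf \<delta> F f (\<delta> q a)))"
    by (intro Bochner_Integration.integral_cong refl)
       (simp add: c_def Bochner_Integration.integral_add Tf_int[OF fb])
  also have "\<dots> = measure_pmf.expectation D c" by (simp add: Suc)
  also have "\<dots> = 0" using f0 by (cases "q \<in> F") (simp_all add: c_def[abs_def])
  finally show ?case .
qed



lemma Tf_sq:
  assumes fb: "\<And>a. \<bar>f a\<bar> \<le> 1" and f0: "measure_pmf.expectation D f = 0"
  shows "measure_pmf.expectation (wordsp D n) (\<lambda>w. (Tf \<delta> F f q w)^2) \<le> n"
proof (induction n arbitrary: q)
  case 0
  then show ?case by simp
next
  case (Suc n)
  define c where "c a = (if q \<in> F then f a else 0)" for a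
  have cb: "\<bar>c a\<bar> \<le> 1" for a using fb by (simp add: c_def)
  have "measure_pmf.expectation (wordsp D (Suc n)) (\<lambda>w. (Tf \<delta> F f q w)^2) =
    measure_pmf.expectation D (\<lambda>a. measure_pmf.expectation (wordsp D n) (\<lambda>w. (Tf \<delta> F f q (a # w))^2))"
  proof (rule Tf_bind[where B="real (Suc n) ^ 2"])
    fix w :: "'a list" assume "length w = Suc n"
    then have "\<bar>Tf \<delta> F f q w\<bar> \<le> real (Suc n)" using Tf_bound[OF fb, where w=w and q=q and \<delta>=\<delta> and F=F] by simp
    then show "\<bar>(Tf \<delta> F f q w)^2\<bar> \<le> real (Suc n) ^ 2"
      by (rule sq_bound)
  qed
  also have "\<dots> = measure_pmf.expectation D (\<lambda>a. (c a)^2 + 2 * c a * measure_pmf.expectation (wordsp D n) (Tf \<delta> F f (\<delta> q a))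
       + measure_pmf.expectation (wordsp D n) (\<lambda>w. (Tf \<delta> F f (\<delta> q a) w)^2))"
  proof (rule Bochner_Integration.integral_cong[OF refl])
    fix a
    have "(\<lambda>w. (Tf \<delta> F f q (a # w))^2) = (\<lambda>w. ((c a)^2 + 2 * c a * Tf \<delta> F f (\<delta> q a) w) + (Tf \<delta> F f (\<delta> q a) w)^2)"
    proof -
      have "Tf \<delta> F f q (a # w) = c a + Tf \<delta> F f (\<delta> q a) w" for w by (simp add: c_def)
      then show ?thesis by (simp add: power2_sum add_ac)
    qed
    show "measure_pmf.expectation (wordsp D n) (\<lambda>w. (Tf \<delta> F f q (a # w))^2) =
      (c a)^2 + 2 * c a * measure_pmf.expectation (wordsp D n) (Tf \<delta> F f (\<delta> q a))
       + measure_pmf.expectation (wordsp D n) (\<lambda>w. (Tf \<delta> F f (\<delta> q a) w)^2)"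
    proof -
      let ?W = "measure_pmf (wordsp D n)" and ?T = "Tf \<delta> F f (\<delta> q a)"
      have i1: "integrable ?W (\<lambda>w. 2 * c a * ?T w)"
        by (rule integrable_mult_right) (rule Tf_int(1)[OF fb])
      have i2: "integrable ?W (\<lambda>w. (?T w)^2)" by (rule Tf_int(2)[OF fb])
      have i0: "integrable ?W (\<lambda>w. (c a)^2)" by simp
      have i3: "integrable ?W (\<lambda>w. (c a)^2 + 2 * c a * ?T w)"
        by (rule Bochner_Integration.integrable_add[OF i0 i1])
      have e1: "integral\<^sup>L ?W (\<lambda>w. ((c a)^2 + 2 * c a * ?T w) + (?T w)^2)
          = integral\<^sup>L ?W (\<lambda>w. (c a)^2 + 2 * c a * ?T w) + integral\<^sup>L ?W (\<lambda>w. (?T w)^2)"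
        by (rule Bochner_Integration.integral_add[OF i3 i2])
      have e2: "integral\<^sup>L ?W (\<lambda>w. (c a)^2 + 2 * c a * ?T w)
          = integral\<^sup>L ?W (\<lambda>w. (c a)^2) + integral\<^sup>L ?W (\<lambda>w. 2 * c a * ?T w)"
        by (rule Bochner_Integration.integral_add[OF i0 i1])
      have e3: "integral\<^sup>L ?W (\<lambda>w. 2 * c a * ?T w) = 2 * c a * integral\<^sup>L ?W ?T"
        by (rule Bochner_Integration.integral_mult_right_zero)
      have e4: "integral\<^sup>L ?W (\<lambda>w. (c a)^2) = (c a)^2" by simp
      show ?thesis using e1 e2 e3 e4 \<open>(\<lambda>w. (Tf \<delta> F f q (a # w))^2) = _\<close> by simp
    qed
  qed
  also have "\<dots> = measure_pmf.expectation D (\<lambda>a. (c a)^2 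
       + measure_pmf.expectation (wordsp D n) (\<lambda>w. (Tf \<delta> F f (\<delta> q a) w)^2))"
    by (simp add: Tf_mean[OF fb f0])
  also have "\<dots> \<le> measure_pmf.expectation D (\<lambda>a. 1 + real n)"
  proof (rule integral_mono)
    show "integrable (measure_pmf D) (\<lambda>a. (c a)^2 
       + measure_pmf.expectation (wordsp D n) (\<lambda>w. (Tf \<delta> F f (\<delta> q a) w)^2))"
    proof (rule int_bdd_on[where B="1 + real n"])
      fix a
      have "0 \<le> measure_pmf.expectation (wordsp D n) (\<lambda>w. (Tf \<delta> F f (\<delta> q a) w)^2)"
        by (rule Bochner_Integration.integral_nonneg) simp
      moreover have "(c a)^2 \<le> 1" using sq_bound[OF cb[of a]] by simp
      ultimately show "\<bar>(c a)^2 + measure_pmf.expectation (wordsp D n) (\<lambda>w. (Tf \<delta> F f (\<delta> q a) w)^2)\<bar> \<le> 1 + real n"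
        using Suc[of "\<delta> q a"] by simp
    qed
    show "integrable (measure_pmf D) (\<lambda>a. 1 + real n)" by simp
    fix a
    have "(c a)^2 \<le> 1" using sq_bound[OF cb[of a]] by simp
    then show "(c a)^2 + measure_pmf.expectation (wordsp D n) (\<lambda>w. (Tf \<delta> F f (\<delta> q a) w)^2) \<le> 1 + real n"
      using Suc[of "\<delta> q a"] by simp
  qed
  also have "\<dots> = real (Suc n)" by simp
  finally show ?case .
qed

lemma Tf_cheb:
  assumes fb: "\<And>a. \<bar>f a\<bar> \<le> 1" and f0: "measure_pmf.expectation D f = 0" and t: "t > 0"
  shows "measure_pmf.prob (wordsp D n) {w. t \<le> \<bar>Tf \<delta> F f q w\<bar>} \<le> real n / t^2"
proof -
  have "measure_pmf.prob (wordsp D n) {w. t \<le> \<bar>Tf \<delta> F f q w\<bar>} \<le>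
        measure_pmf.prob (wordsp D n) {w \<in> space (measure_pmf (wordsp D n)). t^2 \<le> (Tf \<delta> F f q w)^2}"
  proof (rule measure_pmf.finite_measure_mono)
    show "{w. t \<le> \<bar>Tf \<delta> F f q w\<bar>} \<subseteq> {w \<in> space (measure_pmf (wordsp D n)). t^2 \<le> (Tf \<delta> F f q w)^2}"
      using t by (auto simp: abs_le_square_iff[symmetric] abs_of_pos)
  qed simp
  also have "\<dots> \<le> measure_pmf.expectation (wordsp D n) (\<lambda>w. (Tf \<delta> F f q w)^2) / t^2"
    by (rule integral_Markov_inequality_measure[where A=UNIV]) (use t Tf_int[OF fb] in auto)
  also have "\<dots> \<le> real n / t^2"
    using Tf_sq[OF fb f0, of n \<delta> F q] t by (intro divide_right_mono) auto
  finally show ?thesis .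
qed



lemma pmf_D_ok:
  fixes Sig :: "'a set" and p :: "'a \<Rightarrow> real"
  assumes "\<forall>a\<in>Sig. p a > 0 \<and> p a \<le> 1" and "(p has_sum 1) Sig"
  shows "(\<integral>\<^sup>+x. ennreal (if x \<in> Sig then p x else 0) \<partial>count_space UNIV) = 1"
proof -
  let ?q = "\<lambda>x. if x \<in> Sig then p x else 0"
  have hs: "(?q has_sum 1) UNIV"
    using assms(2) by (rule has_sum_cong_neutral[THEN iffD1, rotated -1]) auto
  have nn: "\<And>x. ?q x \<ge> 0" using assms(1) by (auto simp: less_imp_le)
  have "(\<lambda>x. norm (?q x)) summable_on UNIV"
    using hs nn by (simp add: has_sum_imp_summable)
  then have as: "Infinite_Set_Sum.abs_summable_on ?q UNIV" using abs_summable_equivalent by blast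
  have "(\<integral>\<^sup>+x. ennreal (?q x) \<partial>count_space UNIV) = ennreal (infsetsum ?q UNIV)"
    using as nn by (rule nn_integral_conv_infsetsum)
  also have "infsetsum ?q UNIV = infsum ?q UNIV" using as by (rule infsetsum_infsum)
  also have "\<dots> = 1" using hs by (rule infsumI)
  finally show ?thesis by simp
qed

lemma Tf_filter:
  "Tf \<delta> F (\<lambda>a. indicator B a - c) q w =
     real (length (filter (\<lambda>x. x \<in> B) (selected \<delta> F q w))) - c * real (length (selected \<delta> F q w))"
  by (induction w arbitrary: q) (auto simp: algebra_simps indicator_def)

lemma count_le_filter: "P a \<Longrightarrow> count_list xs a \<le> length (filter P xs)"
  by (induction xs) auto

lemma count_le_length: "count_list xs a \<le> length xs"
  by (induction xs) auto

lemma count_single: "length (filter (\<lambda>x. x = a) xs) = count_list xs a"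
  by (induction xs) auto

lemma fB_props:
  fixes D :: "'a pmf" and B :: "'a set"
  shows "\<And>a. \<bar>indicator B a - measure_pmf.prob D B\<bar> \<le> 1"
    and "measure_pmf.expectation D (\<lambda>a. indicator B a - measure_pmf.prob D B) = 0"
proof -
  have "0 \<le> measure_pmf.prob D B" "measure_pmf.prob D B \<le> 1" by auto
  then show "\<And>a. \<bar>indicator B a - measure_pmf.prob D B\<bar> \<le> 1" by (auto simp: indicator_def)
  have i: "integrable (measure_pmf D) (indicator B :: 'a \<Rightarrow> real)"
    by (rule int_bdd_on[where B=1]) (auto simp: indicator_def)
  have "measure_pmf.expectation D (indicator B :: 'a \<Rightarrow> real) = measure_pmf.prob D B"
    by simp
  then show "measure_pmf.expectation D (\<lambda>a. indicator B a - measure_pmf.prob D B) = 0"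
    by (simp add: Bochner_Integration.integral_diff[OF i])
qed

theorem corollary5p6:
  fixes Sig :: "'a set" and p :: "'a \<Rightarrow> real"
    and Q :: "'s set" and \<delta> :: "'s \<Rightarrow> 'a \<Rightarrow> 's" and qs :: 's and F :: "'s set"
    and b \<epsilon> :: real
  assumes "Sig \<noteq> {}" and "countable Sig"
    and "\<forall>a\<in>Sig. p a > 0 \<and> p a \<le> 1" and "(p has_sum 1) Sig"
    and "is_dfa Q Sig \<delta> qs F" and "strongly_connected Q Sig \<delta>"
    and "0 < b" and "b \<le> 1" and "\<epsilon> > 0"
  shows "(\<lambda>n. mu p (G Q Sig \<delta> F p n b \<epsilon>)) \<longlonglongrightarrow> 0"
proof -
  define q where "q x = (if x \<in> Sig then p x else 0)" for x
  have qnn: "\<And>x. 0 \<le> q x" using assms(3) by (auto simp: q_def less_imp_le)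
  have qint: "(\<integral>\<^sup>+x. ennreal (q x) \<partial>count_space UNIV) = 1"
    using pmf_D_ok[OF assms(3,4)] by (simp add: q_def)
  define D where "D = embed_pmf q"
  have pD: "pmf D x = q x" for x
    unfolding D_def by (rule pmf_embed_pmf) (use qnn qint in auto)
  have mu_eq: "mu p X = measure_pmf.prob (wordsp D n) X" if "X \<subseteq> words Sig n" for X n
  proof -
    have "mu p X = infsum (pmf (wordsp D n)) X"
      unfolding mu_def
    proof (rule infsum_cong)
      fix w assume "w \<in> X"
      then have w: "length w = n" "set w \<subseteq> Sig" using that by (auto simp: words_def)
      have wi: "w ! i \<in> Sig" if "i < n" for i using w that by (auto intro: nth_mem)
      have "(\<Prod>i<length w. p (w ! i)) = (\<Prod>i<n. q (w ! i))"
        using w(1) wi by (auto simp: q_def intro!: prod.cong)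
      then show "(\<Prod>i<length w. p (w ! i)) = pmf (wordsp D n) w"
        by (simp add: pmf_wordsp pD w(1))
    qed
    also have "\<dots> = infsetsum (pmf (wordsp D n)) X"
      by (rule infsetsum_infsum[symmetric]) (rule pmf_abs_summable)
    also have "\<dots> = measure_pmf.prob (wordsp D n) X"
      by (rule measure_pmf_conv_infsetsum[symmetric])
    finally show ?thesis .
  qed
  have Gw: "G Q Sig \<delta> F p n b \<epsilon> \<subseteq> words Sig n" for n
    by (auto simp: G_def G_q_def)
  have "\<forall>\<^sub>F X in finite_subsets_at_top Sig. dist (sum p X) 1 < \<epsilon>/4"
    using assms(4) unfolding has_sum_def by (rule tendstoD) (use assms(9) in simp)
  then obtain S where S: "finite S" "S \<subseteq> Sig" "dist (sum p S) 1 < \<epsilon>/4"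
    unfolding eventually_finite_subsets_at_top by blast
  have pDS: "measure_pmf.prob D S = sum p S"
    using S by (auto simp: measure_measure_pmf_finite pD q_def intro!: sum.cong)
  define Sc where "Sc = UNIV - S"
  have "measure_pmf.prob D Sc = 1 - measure_pmf.prob D S"
    unfolding Sc_def using measure_pmf.prob_compl[of S D] by simp
  moreover have "1 - sum p S < \<epsilon>/4"
  proof -
    have d: "\<bar>sum p S - 1\<bar> < \<epsilon>/4" using S(3) by (simp only: dist_real_def)
    then show ?thesis unfolding abs_less_iff by linarith
  qed
  ultimately have pSc: "measure_pmf.prob D Sc < \<epsilon>/4"
    using pDS by simp
  define fB where "fB = (\<lambda>B a. indicator B a - measure_pmf.prob D B)"
  define Bs where "Bs = (\<lambda>a. {a}) ` S \<union> {Sc}"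
  define I where "I = Q \<times> Bs"
  have finQ: "finite Q" using assms(5) by (simp add: is_dfa_def)
  have finI: "finite I" unfolding I_def Bs_def using finQ S(1) by simp
  define K where "K = real (card I) * 16 / (\<epsilon> * b)^2"
  have bound: "mu p (G Q Sig \<delta> F p n b \<epsilon>) \<le> K / real n" if n1: "n \<ge> 1" for n
  proof -
    define t where "t = \<epsilon> * b * real n / 4"
    have bn: "b * real n > 0" using assms(7) n1 by simp
    have t: "t > 0" unfolding t_def using mult_pos_pos[OF assms(9) bn] by (simp add: mult.assoc)
    define A where "A i = {w. t \<le> \<bar>Tf \<delta> F (fB (snd i)) (fst i) w\<bar>}" for i
    have sub: "G Q Sig \<delta> F p n b \<epsilon> \<subseteq> (\<Union>i\<in>I. A i)"
    proof
      fix w assume "w \<in> G Q Sig \<delta> F p n b \<epsilon>"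
      then obtain q0 where q0: "q0 \<in> Q" and wG: "w \<in> G_q Q Sig \<delta> F p n b \<epsilon> q0"
        unfolding G_def by blast
      define s where "s = selected \<delta> F q0 w"
      define L where "L = real (length s)"
      from wG have Lb: "L > b * real n"
        and sup: "(SUP a\<in>Sig. \<bar>real (count_list s a) / L - p a\<bar>) \<ge> \<epsilon>"
        unfolding G_q_def L_def s_def by auto
      have Lpos: "L > 0" using Lb bn by simp
      have bdd: "bdd_above ((\<lambda>a. \<bar>real (count_list s a) / L - p a\<bar>) ` Sig)"
      proof (rule bdd_aboveI2[where M=2])
        fix a assume a: "a \<in> Sig"
        have c1: "real (count_list s a) \<le> L" unfolding L_def using count_le_length[of s a] by simp
        have "real (count_list s a) / L \<le> 1" using c1 Lpos by simp
        moreover have "0 \<le> real (count_list s a) / L" using Lpos by simp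
        moreover have "0 \<le> p a" "p a \<le> 1" using assms(3) a by (auto simp: less_imp_le)
        ultimately show "\<bar>real (count_list s a) / L - p a\<bar> \<le> 2" by linarith
      qed
      have "\<epsilon>/2 < (SUP a\<in>Sig. \<bar>real (count_list s a) / L - p a\<bar>)" using sup assms(9) by linarith
      then obtain a where a: "a \<in> Sig" "\<epsilon>/2 < \<bar>real (count_list s a) / L - p a\<bar>"
        using less_cSUP_iff[OF assms(1) bdd] by blast
      have pa: "measure_pmf.prob D {a} = p a" using a by (simp add: measure_pmf_single pD q_def)
      have ca: "real (count_list s a) - p a * L = L * (real (count_list s a) / L - p a)"
        using Lpos by (simp add: field_simps)
      show "w \<in> (\<Union>i\<in>I. A i)"
      proof (cases "a \<in> S")
        case True
        have "(q0, {a}) \<in> I" using q0 True by (auto simp: I_def Bs_def)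
        moreover have "w \<in> A (q0, {a})"
        proof -
          have T: "Tf \<delta> F (fB {a}) q0 w = real (count_list s a) - p a * L"
            by (simp add: fB_def Tf_filter pa L_def s_def count_single)
          have "\<bar>real (count_list s a) - p a * L\<bar> = L * \<bar>real (count_list s a) / L - p a\<bar>"
            unfolding ca using Lpos by (simp add: abs_mult)
          also have "\<dots> \<ge> L * (\<epsilon>/2)" using a(2) Lpos by simp
          finally have "\<bar>real (count_list s a) - p a * L\<bar> \<ge> L * (\<epsilon>/2)" .
          moreover have "L * (\<epsilon>/2) \<ge> b * real n * (\<epsilon>/2)"
            using Lb assms(9) by (intro mult_right_mono) auto
          moreover have "b * real n * (\<epsilon>/2) \<ge> t" unfolding t_def using bn assms(9) by simp
          ultimately show ?thesis unfolding A_def by (simp add: T)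
        qed
        ultimately show ?thesis by blast
      next
        case False
        have "(q0, Sc) \<in> I" using q0 by (auto simp: I_def Bs_def)
        moreover have "w \<in> A (q0, Sc)"
        proof -
          have aSc: "a \<in> Sc" using False Sc_def by simp
          have "measure_pmf.prob D {a} \<le> measure_pmf.prob D Sc"
            using aSc by (intro measure_pmf.finite_measure_mono) auto
          with pSc pa have pa4: "p a < \<epsilon>/4" by simp
          have pa0: "0 \<le> p a" using assms(3) a(1) by (auto simp: less_imp_le)
          have c0: "0 \<le> real (count_list s a) / L" using Lpos by simp
          have dev: "real (count_list s a) / L - p a > \<epsilon>/2" using a(2) c0 pa4 assms(9) by linarith
          have cnt: "real (count_list s a) - p a * L > L * (\<epsilon>/2)"
            unfolding ca using dev Lpos by simp
          have le: "count_list s a \<le> length (filter (\<lambda>x. x \<in> Sc) s)"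
            by (rule count_le_filter) (use aSc in simp)
          have T: "Tf \<delta> F (fB Sc) q0 w = real (length (filter (\<lambda>x. x \<in> Sc) s)) - measure_pmf.prob D Sc * L"
            by (simp add: fB_def Tf_filter L_def s_def)
          have m1: "measure_pmf.prob D Sc * L \<le> (\<epsilon>/4) * L" using pSc Lpos by simp
          have m2: "p a * L \<ge> 0" using pa0 Lpos by simp
          have m3: "L * (\<epsilon>/4) \<ge> b * real n * (\<epsilon>/4)"
            using Lb assms(9) by (intro mult_right_mono) auto
          have m4: "b * real n * (\<epsilon>/4) = t" unfolding t_def by simp
          have "Tf \<delta> F (fB Sc) q0 w \<ge> t"
            unfolding T using le cnt m1 m2 m3 m4 by (simp add: algebra_simps)
          then show ?thesis unfolding A_def by simp
        qed
        ultimately show ?thesis by blast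
      qed
    qed
    have "mu p (G Q Sig \<delta> F p n b \<epsilon>) = measure_pmf.prob (wordsp D n) (G Q Sig \<delta> F p n b \<epsilon>)"
      by (rule mu_eq[OF Gw])
    also have "\<dots> \<le> measure_pmf.prob (wordsp D n) (\<Union>i\<in>I. A i)"
      by (rule measure_pmf.finite_measure_mono[OF sub]) simp
    also have "\<dots> \<le> (\<Sum>i\<in>I. measure_pmf.prob (wordsp D n) (A i))"
      by (rule measure_pmf.finite_measure_subadditive_finite[OF finI]) auto
    also have "\<dots> \<le> (\<Sum>i\<in>I. real n / t^2)"
    proof (rule sum_mono)
      fix i assume "i \<in> I"
      show "measure_pmf.prob (wordsp D n) (A i) \<le> real n / t^2"
        unfolding A_def fB_def by (rule Tf_cheb[OF fB_props t])
    qed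
    also have "\<dots> = K / real n"
      using n1 assms(7,9) by (simp add: K_def t_def field_simps power2_eq_square)
    finally show ?thesis .
  qed
  show ?thesis
  proof (rule tendsto_sandwich[where f="\<lambda>n. 0" and h="\<lambda>n. K / real n"])
    show "\<forall>\<^sub>F n in sequentially. 0 \<le> mu p (G Q Sig \<delta> F p n b \<epsilon>)"
      by (simp add: mu_eq[OF Gw])
    show "\<forall>\<^sub>F n in sequentially. mu p (G Q Sig \<delta> F p n b \<epsilon>) \<le> K / real n"
      using bound by (auto simp: eventually_sequentially)
    show "(\<lambda>n. 0) \<longlonglongrightarrow> (0::real)" by simp
    show "(\<lambda>n. K / real n) \<longlonglongrightarrow> 0" by (rule lim_const_over_n)
  qed
qed

end
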